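(* For every $-1<\theta<1$ and positive integer $k$, there exists $h>0$ such that for every $d'\ge0$ there is a probability distribution $P_F^{d'}$ over functions $F:\{0,1\}^{L_{d'}}\to\{0,1,?\}$ with the following properties: (1) every function in the support of $P_F^{d'}$ can be computed by a circuit of depth at most $hd'$ with NOT gates and fan-in-two AND/OR gates; (2) for every $x\in\{0,1\}^{L_{d'}}$, if $F\sim P_F^{d'}$ then $\mathbb{P}[F(x)\in\{0,1\}]\ge 1-1/(2k)$; (3) for every $x\in\{0,1\}^{L_{d'}}$, $\mathbb{P}[F(x)=1\mid F(x)\in\{0,1\}]=\mathbb{P}[X^{(0)}=1\mid X^{(d')}=x]$.
   Context: Broadcast (Ising) tree model: complete $k$-ary tree of depth $d'$ with root $\rho$; $L_r$ = vertices at depth $r$; $\sigma_\rho$ uniform on $\{0,1\}$; each child $v$ of $u$ independently has $\sigma_v=\sigma_u$ with probability $(1+\theta)/2$ and $1-\sigma_u$ otherwise; $X^{(r)}=(\sigma_v)_{v\in L_r}$. The three output values $0,1,?$ are encoded in binary. *)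

theory Defs
  imports "HOL-Probability.Probability"
begin

text \<open>Leaves at depth d are indexed by 0..<k^d (base-k digit order: the leaves of the
subtree of the j-th child of the root are j*k^(d-1) .. (j+1)*k^(d-1)-1).
Labels are bool (True = 1, False = 0).  Only indices below k^d are meaningful.\<close>

definition child_label :: "real \<Rightarrow> bool \<Rightarrow> bool pmf" where
  "child_label \<theta> a = map_pmf (\<lambda>c. if c then a else \<not> a) (bernoulli_pmf ((1 + \<theta>) / 2))"

fun broadcast_leaves :: "real \<Rightarrow> nat \<Rightarrow> nat \<Rightarrow> bool \<Rightarrow> (nat \<Rightarrow> bool) pmf" where
  "broadcast_leaves \<theta> k 0 a = return_pmf (\<lambda>i. a)"
| "broadcast_leaves \<theta> k (Suc d) a =
     map_pmf (\<lambda>f i. f (i div k ^ d) (i mod k ^ d))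
       (Pi_pmf {..<k} (\<lambda>i. False)
          (\<lambda>j. bind_pmf (child_label \<theta> a) (\<lambda>b. broadcast_leaves \<theta> k d b)))"

definition broadcast :: "real \<Rightarrow> nat \<Rightarrow> nat \<Rightarrow> (bool \<times> (nat \<Rightarrow> bool)) pmf" where
  "broadcast \<theta> k d =
     bind_pmf (bernoulli_pmf (1/2)) (\<lambda>r. map_pmf (\<lambda>X. (r, X)) (broadcast_leaves \<theta> k d r))"

definition root_posterior :: "real \<Rightarrow> nat \<Rightarrow> nat \<Rightarrow> (nat \<Rightarrow> bool) \<Rightarrow> real" where
  "root_posterior \<theta> k d x =
     measure_pmf.prob (broadcast \<theta> k d) {(r, X). r \<and> (\<forall>i < k ^ d. X i = x i)}
     / measure_pmf.prob (broadcast \<theta> k d) {(r, X). \<forall>i < k ^ d. X i = x i}"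

text \<open>A depth-bounded circuit can be unfolded into a formula of the same depth, so circuits
are represented as formula trees.  Inputs and constants have depth 0.\<close>
datatype circ = Inp nat | Cst bool | NotG circ | AndG circ circ | OrG circ circ

fun eval_circ :: "circ \<Rightarrow> (nat \<Rightarrow> bool) \<Rightarrow> bool" where
  "eval_circ (Inp i) x = x i"
| "eval_circ (Cst b) x = b"
| "eval_circ (NotG c) x = (\<not> eval_circ c x)"
| "eval_circ (AndG c1 c2) x = (eval_circ c1 x \<and> eval_circ c2 x)"
| "eval_circ (OrG c1 c2) x = (eval_circ c1 x \<or> eval_circ c2 x)"

fun circ_depth :: "circ \<Rightarrow> nat" where
  "circ_depth (Inp i) = 0"
| "circ_depth (Cst b) = 0"
| "circ_depth (NotG c) = Suc (circ_depth c)"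
| "circ_depth (AndG c1 c2) = Suc (max (circ_depth c1) (circ_depth c2))"
| "circ_depth (OrG c1 c2) = Suc (max (circ_depth c1) (circ_depth c2))"

fun circ_vars :: "circ \<Rightarrow> nat set" where
  "circ_vars (Inp i) = {i}"
| "circ_vars (Cst b) = {}"
| "circ_vars (NotG c) = circ_vars c"
| "circ_vars (AndG c1 c2) = circ_vars c1 \<union> circ_vars c2"
| "circ_vars (OrG c1 c2) = circ_vars c1 \<union> circ_vars c2"

text \<open>Output values 0,1,? are encoded by two output bits (b1,b2):
 b1 = False means ?, otherwise the value is b2.  As HOL values: None = ?, Some False = 0, Some True = 1.\<close>
definition decode_out :: "bool \<Rightarrow> bool \<Rightarrow> bool option" where
  "decode_out b1 b2 = (if b1 then Some b2 else None)"

definition computable_depth :: "nat \<Rightarrow> real \<Rightarrow> ((nat \<Rightarrow> bool) \<Rightarrow> bool option) \<Rightarrow> bool" where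
  "computable_depth n D F \<longleftrightarrow>
     (\<exists>c1 c2. circ_vars c1 \<subseteq> {..<n} \<and> circ_vars c2 \<subseteq> {..<n} \<and>
        real (max (circ_depth c1) (circ_depth c2)) \<le> D \<and>
        (\<forall>x. F x = decode_out (eval_circ c1 x) (eval_circ c2 x)))"

end

theory Submission
  imports Defs
begin

lemma prob_pair_times:
  "measure_pmf.prob (pair_pmf M N) (A \<times> B) = measure_pmf.prob M A * measure_pmf.prob N B"
proof -
  have "measure_pmf.prob (pair_pmf M N) (A \<times> B) = measure_pmf.prob (pair_pmf M N) ((A \<times> B) \<inter> set_pmf (pair_pmf M N))"
    by (rule measure_Int_set_pmf[symmetric])
  also have "(A \<times> B) \<inter> set_pmf (pair_pmf M N) = (A \<inter> set_pmf M) \<times> (B \<inter> set_pmf N)" by auto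
  also have "measure_pmf.prob (pair_pmf M N) \<dots> = measure_pmf.prob M (A \<inter> set_pmf M) * measure_pmf.prob N (B \<inter> set_pmf N)"
    by (rule measure_pmf_prob_product) (auto intro: countable_Int2)
  finally show ?thesis by (simp add: measure_Int_set_pmf)
qed

lemma prob_bind_bool:
  fixes M :: "bool pmf"
  shows "measure_pmf.prob (bind_pmf M N) X = pmf M True * measure_pmf.prob (N True) X + pmf M False * measure_pmf.prob (N False) X"
proof -
  have "emeasure (measure_pmf (bind_pmf M N)) X = (\<integral>\<^sup>+x. emeasure (N x) X \<partial>M)" by simp
  also have "\<dots> = (\<Sum>x\<in>UNIV. emeasure (N x) X * pmf M x)"
    by (subst nn_integral_measure_pmf_support[of UNIV]) auto
  also have "\<dots> = ennreal (pmf M True * measure_pmf.prob (N True) X + pmf M False * measure_pmf.prob (N False) X)"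
    by (simp add: UNIV_bool measure_pmf.emeasure_eq_measure ennreal_mult' ennreal_plus mult.commute)
  finally show ?thesis by (simp add: measure_pmf.emeasure_eq_measure)
      (metis ennreal_inj ennreal_plus measure_nonneg mult_nonneg_nonneg pmf_nonneg add_nonneg_nonneg)
qed

lemma pmf_child_label:
  assumes "-1 \<le> \<theta>" "\<theta> \<le> 1"
  shows "pmf (child_label \<theta> a) b = (if a = b then (1+\<theta>)/2 else (1-\<theta>)/2)"
proof -
  have e: "{x. x} = {True}" "{x. \<not> x} = {False}" by auto
  show ?thesis using assms unfolding child_label_def
  by (cases a; cases b) (auto simp: pmf_map vimage_def e measure_pmf_single field_simps)
qed



definition shx :: "nat \<Rightarrow> nat \<Rightarrow> (nat \<Rightarrow> bool) \<Rightarrow> (nat \<Rightarrow> bool)" where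
  "shx n j x = (\<lambda>i. x (j * n + i))"

definition Lk :: "real \<Rightarrow> nat \<Rightarrow> nat \<Rightarrow> bool \<Rightarrow> (nat \<Rightarrow> bool) \<Rightarrow> real" where
  "Lk \<theta> k d a x = measure_pmf.prob (broadcast_leaves \<theta> k d a) {X. \<forall>i<k^d. X i = x i}"

definition Qk :: "real \<Rightarrow> nat \<Rightarrow> nat \<Rightarrow> bool \<Rightarrow> (nat \<Rightarrow> bool) \<Rightarrow> real" where
  "Qk \<theta> k d a y = measure_pmf.prob (bind_pmf (child_label \<theta> a) (\<lambda>b. broadcast_leaves \<theta> k d b)) {X. \<forall>i<k^d. X i = y i}"

lemma Qk_eq: "Qk \<theta> k d a y = pmf (child_label \<theta> a) True * Lk \<theta> k d True y + pmf (child_label \<theta> a) False * Lk \<theta> k d False y"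
  unfolding Qk_def Lk_def by (rule prob_bind_bool)

lemma Lk_Suc:
  assumes "0 < k"
  shows "Lk \<theta> k (Suc d) a x = (\<Prod>j<k. Qk \<theta> k d a (shx (k^d) j x))"
proof -
  define n where "n = k ^ d"
  have n: "0 < n" using assms by (simp add: n_def)
  have kn: "k ^ Suc d = k * n" by (simp add: n_def)
  have eq: "(\<lambda>f i. f (i div n) (i mod n)) -` {X. \<forall>i<k ^ Suc d. X i = x i}
        = Pi {..<k} (\<lambda>j. {X. \<forall>i<n. X i = shx n j x i})"
  proof (intro set_eqI iffI)
    fix f :: "nat \<Rightarrow> nat \<Rightarrow> bool"
    assume h: "f \<in> (\<lambda>f i. f (i div n) (i mod n)) -` {X. \<forall>i<k ^ Suc d. X i = x i}"
    show "f \<in> Pi {..<k} (\<lambda>j. {X. \<forall>i<n. X i = shx n j x i})"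
    proof (intro Pi_I CollectI allI impI)
      fix j i assume j: "j \<in> {..<k}" and i: "i < n"
      have "j * n + i < Suc j * n" using i by simp
      also have "\<dots> \<le> k * n" using j by (intro mult_le_mono1) simp
      finally have "j * n + i < k * n" .
      then have "f ((j*n+i) div n) ((j*n+i) mod n) = x (j*n+i)" using h kn by auto
      then show "f j i = shx n j x i" using i n by (simp add: shx_def)
    qed
  next
    fix f :: "nat \<Rightarrow> nat \<Rightarrow> bool"
    assume h: "f \<in> Pi {..<k} (\<lambda>j. {X. \<forall>i<n. X i = shx n j x i})"
    show "f \<in> (\<lambda>f i. f (i div n) (i mod n)) -` {X. \<forall>i<k ^ Suc d. X i = x i}"
    unfolding vimage_def mem_Collect_eq proof (intro allI impI)
      fix i assume i: "i < k ^ Suc d"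
      then have "i div n < k" using kn by (simp only:) (simp add: div_less_iff_less_mult n)
      then have "f (i div n) (i mod n) = shx n (i div n) x (i mod n)" using h n Pi_mem[OF h, of "i div n"] by simp
      also have "\<dots> = x i" by (simp add: shx_def mult.commute)
      finally show "f (i div n) (i mod n) = x i" .
    qed
  qed
  show ?thesis
    unfolding Lk_def Qk_def n_def[symmetric]
    by (simp only: broadcast_leaves.simps measure_map_pmf n_def[symmetric] eq measure_Pi_pmf_Pi[OF finite_lessThan])
qed



fun shiftc :: "nat \<Rightarrow> circ \<Rightarrow> circ" where
  "shiftc m (Inp i) = Inp (m + i)"
| "shiftc m (Cst b) = Cst b"
| "shiftc m (NotG c) = NotG (shiftc m c)"
| "shiftc m (AndG c1 c2) = AndG (shiftc m c1) (shiftc m c2)"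
| "shiftc m (OrG c1 c2) = OrG (shiftc m c1) (shiftc m c2)"

lemma shiftc_props:
  "eval_circ (shiftc m c) x = eval_circ c (\<lambda>i. x (m + i))"
  "circ_depth (shiftc m c) = circ_depth c"
  "circ_vars (shiftc m c) = (\<lambda>i. m + i) ` circ_vars c"
  by (induction c) auto

definition cd :: "nat \<Rightarrow> nat \<Rightarrow> ((nat \<Rightarrow> bool) \<Rightarrow> bool) \<Rightarrow> bool" where
  "cd n D f \<longleftrightarrow> (\<exists>c. circ_vars c \<subseteq> {..<n} \<and> circ_depth c \<le> D \<and> (\<forall>x. f x = eval_circ c x))"

lemma cd_mono: "cd n D f \<Longrightarrow> D \<le> D' \<Longrightarrow> cd n D' f"
  unfolding cd_def by (meson order_trans)

lemma cd_const: "cd n D (\<lambda>x. b)"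
  unfolding cd_def by (intro exI[of _ "Cst b"]) auto

lemma cd_inp: "i < n \<Longrightarrow> cd n D (\<lambda>x. x i)"
  unfolding cd_def by (intro exI[of _ "Inp i"]) auto

lemma cd_not: "cd n D f \<Longrightarrow> cd n (Suc D) (\<lambda>x. \<not> f x)"
  unfolding cd_def by (metis circ_depth.simps(3) circ_vars.simps(3) eval_circ.simps(3) not_less_eq_eq)

lemma cd_and: "cd n D f \<Longrightarrow> cd n D g \<Longrightarrow> cd n (Suc D) (\<lambda>x. f x \<and> g x)"
  unfolding cd_def
  apply (elim exE conjE)
  subgoal for c1 c2 by (intro exI[of _ "AndG c1 c2"]) auto
  done

lemma cd_or: "cd n D f \<Longrightarrow> cd n D g \<Longrightarrow> cd n (Suc D) (\<lambda>x. f x \<or> g x)"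
  unfolding cd_def
  apply (elim exE conjE)
  subgoal for c1 c2 by (intro exI[of _ "OrG c1 c2"]) auto
  done

lemma cd_shift: "cd n D f \<Longrightarrow> Suc j * n \<le> N \<Longrightarrow> cd N D (\<lambda>x. f (shx n j x))"
  unfolding cd_def
  apply (elim exE conjE)
  subgoal for c
    apply (intro exI[of _ "shiftc (j*n) c"])
    apply (auto simp: shiftc_props shx_def)
    done
  done

definition CF :: "nat \<Rightarrow> nat \<Rightarrow> ((nat \<Rightarrow> bool) \<Rightarrow> bool option) \<Rightarrow> bool" where
  "CF n D F \<longleftrightarrow> (\<exists>f1 f2. cd n D f1 \<and> cd n D f2 \<and> (\<forall>x. F x = decode_out (f1 x) (f2 x)))"

lemma CF_mono: "CF n D F \<Longrightarrow> D \<le> D' \<Longrightarrow> CF n D' F"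
  unfolding CF_def by (meson cd_mono)

lemma CF_computable: "CF n D F \<Longrightarrow> real D \<le> r \<Longrightarrow> computable_depth n r F"
proof -
  assume "CF n D F" and r: "real D \<le> r"
  then obtain f1 f2 where h: "cd n D f1" "cd n D f2" "\<forall>x. F x = decode_out (f1 x) (f2 x)"
    unfolding CF_def by blast
  obtain c1 where c1: "circ_vars c1 \<subseteq> {..<n}" "circ_depth c1 \<le> D" "\<forall>x. f1 x = eval_circ c1 x"
    using h(1) unfolding cd_def by blast
  obtain c2 where c2: "circ_vars c2 \<subseteq> {..<n}" "circ_depth c2 \<le> D" "\<forall>x. f2 x = eval_circ c2 x"
    using h(2) unfolding cd_def by blast
  have "real (max (circ_depth c1) (circ_depth c2)) \<le> r" using c1 c2 r
    by (metis max.bounded_iff of_nat_le_iff order_trans)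
  then show ?thesis unfolding computable_depth_def using c1 c2 h(3) by auto
qed

lemma CF_shift: "CF n D F \<Longrightarrow> Suc j * n \<le> N \<Longrightarrow> CF N D (\<lambda>x. F (shx n j x))"
proof -
  assume "CF n D F" and N: "Suc j * n \<le> N"
  then obtain f1 f2 where h: "cd n D f1" "cd n D f2" "\<forall>x. F x = decode_out (f1 x) (f2 x)"
    unfolding CF_def by blast
  show ?thesis unfolding CF_def
    by (intro exI[of _ "\<lambda>x. f1 (shx n j x)"] exI[of _ "\<lambda>x. f2 (shx n j x)"] conjI
        cd_shift[OF h(1) N] cd_shift[OF h(2) N]) (simp add: h(3))
qed

lemma CF_none: "CF n D (\<lambda>x. None)"
  unfolding CF_def decode_out_def by (intro exI[of _ "\<lambda>x. False"]) (auto intro: cd_const)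

definition combine2 :: "((nat \<Rightarrow> bool) \<Rightarrow> bool option) \<Rightarrow> ((nat \<Rightarrow> bool) \<Rightarrow> bool option) \<Rightarrow> (nat \<Rightarrow> bool) \<Rightarrow> bool option" where
  "combine2 f g x = (if f x = g x then f x else None)"

definition firstc :: "((nat \<Rightarrow> bool) \<Rightarrow> bool option) \<Rightarrow> ((nat \<Rightarrow> bool) \<Rightarrow> bool option) \<Rightarrow> (nat \<Rightarrow> bool) \<Rightarrow> bool option" where
  "firstc t r x = (case t x of None \<Rightarrow> r x | Some b \<Rightarrow> Some b)"

lemma cd_and2: "cd n D1 f \<Longrightarrow> cd n D2 g \<Longrightarrow> D1 < D \<Longrightarrow> D2 < D \<Longrightarrow> cd n D (\<lambda>x. f x \<and> g x)"
  by (metis Suc_leI cd_and cd_mono max.bounded_iff max.cobounded1 max.cobounded2 Suc_le_mono max_Suc_Suc le_max_iff_disj)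

lemma cd_or2: "cd n D1 f \<Longrightarrow> cd n D2 g \<Longrightarrow> D1 < D \<Longrightarrow> D2 < D \<Longrightarrow> cd n D (\<lambda>x. f x \<or> g x)"
proof -
  assume a: "cd n D1 f" "cd n D2 g" "D1 < D" "D2 < D"
  then obtain D0 where "D = Suc D0" "D1 \<le> D0" "D2 \<le> D0" by (metis Suc_le_D Suc_le_eq less_Suc_eq_le Suc_le_mono)
  then show ?thesis using a cd_or cd_mono by metis
qed

lemma cd_not2: "cd n D1 f \<Longrightarrow> D1 < D \<Longrightarrow> cd n D (\<lambda>x. \<not> f x)"
  by (metis Suc_leI cd_mono cd_not)

lemma CF_combine2: "CF n D f \<Longrightarrow> CF n D g \<Longrightarrow> CF n (D + 4) (combine2 f g)"
  unfolding CF_def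
proof (elim exE conjE)
  fix f1 f2 g1 g2
  assume h: "cd n D f1" "cd n D f2" "\<forall>x. f x = decode_out (f1 x) (f2 x)"
    "cd n D g1" "cd n D g2" "\<forall>x. g x = decode_out (g1 x) (g2 x)"
  have a1: "cd n (D+1) (\<lambda>x. f1 x \<and> g1 x)" by (rule cd_and2[OF h(1) h(4)]) auto
  have a2: "cd n (D+1) (\<lambda>x. f2 x \<and> g2 x)" by (rule cd_and2[OF h(2) h(5)]) auto
  have a3: "cd n (D+2) (\<lambda>x. \<not> f2 x \<and> \<not> g2 x)"
    by (rule cd_and2[OF cd_not2[OF h(2)] cd_not2[OF h(5)]]) auto
  have a4: "cd n (D+3) (\<lambda>x. (f2 x \<and> g2 x) \<or> (\<not> f2 x \<and> \<not> g2 x))"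
    by (rule cd_or2[OF a2 a3]) auto
  have a5: "cd n (D+4) (\<lambda>x. (f1 x \<and> g1 x) \<and> ((f2 x \<and> g2 x) \<or> (\<not> f2 x \<and> \<not> g2 x)))"
    by (rule cd_and2[OF a1 a4]) auto
  have a6: "cd n (D+4) f2" by (rule cd_mono[OF h(2)]) auto
  show "\<exists>f1 f2. cd n (D + 4) f1 \<and> cd n (D + 4) f2 \<and> (\<forall>x. combine2 f g x = decode_out (f1 x) (f2 x))"
    using a5 a6 h by (intro exI[of _ "\<lambda>x. (f1 x \<and> g1 x) \<and> ((f2 x \<and> g2 x) \<or> (\<not> f2 x \<and> \<not> g2 x))"] exI[of _ f2] conjI[OF a5] conjI[OF a6]) (auto simp: combine2_def decode_out_def)
qed

lemma CF_firstc: "CF n D f \<Longrightarrow> CF n D g \<Longrightarrow> CF n (D + 3) (firstc f g)"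
  unfolding CF_def
proof (elim exE conjE)
  fix f1 f2 g1 g2
  assume h: "cd n D f1" "cd n D f2" "\<forall>x. f x = decode_out (f1 x) (f2 x)"
    "cd n D g1" "cd n D g2" "\<forall>x. g x = decode_out (g1 x) (g2 x)"
  have a1: "cd n (D+3) (\<lambda>x. f1 x \<or> g1 x)" by (rule cd_or2[OF h(1) h(4)]) auto
  have a2: "cd n (D+1) (\<lambda>x. f1 x \<and> f2 x)" by (rule cd_and2[OF h(1) h(2)]) auto
  have a3: "cd n (D+2) (\<lambda>x. \<not> f1 x \<and> g2 x)"
    by (rule cd_and2[OF cd_not2[OF h(1)] h(5)]) auto
  have a4: "cd n (D+3) (\<lambda>x. (f1 x \<and> f2 x) \<or> (\<not> f1 x \<and> g2 x))"
    by (rule cd_or2[OF a2 a3]) auto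
  show "\<exists>f1' f2'. cd n (D + 3) f1' \<and> cd n (D + 3) f2' \<and> (\<forall>x. firstc f g x = decode_out (f1' x) (f2' x))"
    using h by (intro exI[of _ "\<lambda>x. f1 x \<or> g1 x"] exI[of _ "\<lambda>x. (f1 x \<and> f2 x) \<or> (\<not> f1 x \<and> g2 x)"] conjI[OF a1] conjI[OF a4]) (auto simp: firstc_def decode_out_def)
qed

definition msg :: "nat \<Rightarrow> nat \<Rightarrow> ((nat \<Rightarrow> bool) \<Rightarrow> bool option) \<times> bool \<Rightarrow> (nat \<Rightarrow> bool) \<Rightarrow> bool option" where
  "msg n j Ge x = (case fst Ge (shx n j x) of None \<Rightarrow> None | Some b \<Rightarrow> Some (if snd Ge then b else \<not> b))"

lemma CF_msg: "CF n D G \<Longrightarrow> Suc j * n \<le> N \<Longrightarrow> CF N (Suc D) (msg n j (G, e))"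
  unfolding CF_def
proof (elim exE conjE)
  fix f1 f2 assume h: "cd n D f1" "cd n D f2" "\<forall>x. G x = decode_out (f1 x) (f2 x)" and N: "Suc j * n \<le> N"
  have b1: "cd N (Suc D) (\<lambda>x. f1 (shx n j x))" by (rule cd_mono[OF cd_shift[OF h(1) N]]) auto
  have b2: "cd N D (\<lambda>x. f2 (shx n j x))" by (rule cd_shift[OF h(2) N])
  have b3: "cd N (Suc D) (\<lambda>x. if e then f2 (shx n j x) else \<not> f2 (shx n j x))"
    using cd_mono[OF b2] cd_not[OF b2] by (cases e) auto
  show "\<exists>f1' f2'. cd N (Suc D) f1' \<and> cd N (Suc D) f2' \<and> (\<forall>x. msg n j (G, e) x = decode_out (f1' x) (f2' x))"
    using h by (intro exI[of _ "\<lambda>x. f1 (shx n j x)"] exI[of _ "\<lambda>x. if e then f2 (shx n j x) else \<not> f2 (shx n j x)"] conjI[OF b1] conjI[OF b3]) (auto simp: msg_def decode_out_def)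
qed



lemma prob_three:
  fixes R :: "((nat \<Rightarrow> bool) \<Rightarrow> bool option) pmf"
  shows "measure_pmf.prob R {F. F x \<noteq> None} = measure_pmf.prob R {F. F x = Some True} + measure_pmf.prob R {F. F x = Some False}"
    "measure_pmf.prob R {F. F x = None} + measure_pmf.prob R {F. F x \<noteq> None} = 1"
proof -
  have "{F. F x \<noteq> None} = {F. F x = Some True} \<union> {F. F x = Some False}" by auto
  moreover have "measure_pmf.prob R ({F. F x = Some True} \<union> {F. F x = Some False}) = measure_pmf.prob R {F. F x = Some True} + measure_pmf.prob R {F. F x = Some False}"
    by (rule measure_pmf.finite_measure_Union) auto
  ultimately show "measure_pmf.prob R {F. F x \<noteq> None} = measure_pmf.prob R {F. F x = Some True} + measure_pmf.prob R {F. F x = Some False}" by simp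
  have "measure_pmf.prob R ({F. F x = None} \<union> {F. F x \<noteq> None}) = measure_pmf.prob R {F. F x = None} + measure_pmf.prob R {F. F x \<noteq> None}"
    by (rule measure_pmf.finite_measure_Union) auto
  moreover have u: "{F. F x = None} \<union> {F. F x \<noteq> None} = UNIV" by auto
  moreover have "measure_pmf.prob R UNIV = 1" by simp
  ultimately show "measure_pmf.prob R {F. F x = None} + measure_pmf.prob R {F. F x \<noteq> None} = 1" by metis
qed

definition childdist :: "real \<Rightarrow> nat \<Rightarrow> ((nat \<Rightarrow> bool) \<Rightarrow> bool option) pmf \<Rightarrow> nat \<Rightarrow> ((nat \<Rightarrow> bool) \<Rightarrow> bool option) pmf" where
  "childdist \<theta> n R j = map_pmf (msg n j) (pair_pmf R (bernoulli_pmf ((1+\<theta>)/2)))"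

lemma prob_childdist:
  assumes "-1 \<le> \<theta>" "\<theta> \<le> 1"
  shows "measure_pmf.prob (childdist \<theta> n R j) {f. f x = Some a} =
     measure_pmf.prob R {F. F (shx n j x) = Some a} * ((1+\<theta>)/2) + measure_pmf.prob R {F. F (shx n j x) = Some (\<not> a)} * ((1-\<theta>)/2)"
proof -
  have "msg n j -` {f. f x = Some a} = {F. F (shx n j x) = Some a} \<times> {True} \<union> {F. F (shx n j x) = Some (\<not> a)} \<times> {False}"
    by (auto simp: msg_def split: option.splits if_splits)
  then have "measure_pmf.prob (childdist \<theta> n R j) {f. f x = Some a} =
     measure_pmf.prob (pair_pmf R (bernoulli_pmf ((1+\<theta>)/2))) ({F. F (shx n j x) = Some a} \<times> {True} \<union> {F. F (shx n j x) = Some (\<not> a)} \<times> {False})"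
    by (simp add: childdist_def)
  also have "\<dots> = measure_pmf.prob (pair_pmf R (bernoulli_pmf ((1+\<theta>)/2))) ({F. F (shx n j x) = Some a} \<times> {True})
     + measure_pmf.prob (pair_pmf R (bernoulli_pmf ((1+\<theta>)/2))) ({F. F (shx n j x) = Some (\<not> a)} \<times> {False})"
    by (rule measure_pmf.finite_measure_Union) auto
  also have "\<dots> = measure_pmf.prob R {F. F (shx n j x) = Some a} * ((1+\<theta>)/2) + measure_pmf.prob R {F. F (shx n j x) = Some (\<not> a)} * ((1-\<theta>)/2)"
    using assms by (simp add: prob_pair_times measure_pmf_single field_simps)
  finally show ?thesis .
qed

fun agree :: "real \<Rightarrow> nat \<Rightarrow> ((nat \<Rightarrow> bool) \<Rightarrow> bool option) pmf \<Rightarrow> nat \<Rightarrow> ((nat \<Rightarrow> bool) \<Rightarrow> bool option) pmf" where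
  "agree \<theta> n R 0 = childdist \<theta> n R 0"
| "agree \<theta> n R (Suc m) = map_pmf (\<lambda>(f, g). combine2 f g) (pair_pmf (agree \<theta> n R m) (childdist \<theta> n R (Suc m)))"

lemma prob_agree:
  "measure_pmf.prob (agree \<theta> n R m) {f. f x = Some a} = (\<Prod>j<Suc m. measure_pmf.prob (childdist \<theta> n R j) {f. f x = Some a})"
proof (induction m)
  case 0 then show ?case by simp
next
  case (Suc m)
  have "(\<lambda>(f, g). combine2 f g) -` {f. f x = Some a} = {f. f x = Some a} \<times> {g. g x = Some a}"
    by (auto simp: combine2_def split: if_splits)
  then show ?case using Suc by (simp add: prob_pair_times)
qed

lemma CF_agree:
  assumes "\<forall>F\<in>set_pmf R. CF n D F" "m < k"
  shows "\<forall>f\<in>set_pmf (agree \<theta> n R m). CF (k * n) (D + 1 + 4 * m) f"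
  using assms(2)
proof (induction m)
  case 0
  have "Suc 0 * n \<le> k * n" using 0 by simp
  then show ?case using assms(1) by (auto simp: childdist_def intro!: CF_msg)
next
  case (Suc m)
  have le: "Suc (Suc m) * n \<le> k * n" using Suc.prems by (intro mult_le_mono1) simp
  have c: "\<forall>g\<in>set_pmf (childdist \<theta> n R (Suc m)). CF (k * n) (D + 1 + 4 * m) g"
    using assms(1) le by (auto simp: childdist_def intro!: CF_mono[OF CF_msg])
  show ?case using Suc c
    by (auto intro!: CF_mono[OF CF_combine2])
qed

fun rep :: "((nat \<Rightarrow> bool) \<Rightarrow> bool option) pmf \<Rightarrow> nat \<Rightarrow> ((nat \<Rightarrow> bool) \<Rightarrow> bool option) pmf" where
  "rep P 0 = return_pmf (\<lambda>x. None)"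
| "rep P (Suc t) = map_pmf (\<lambda>(f, g). firstc f g) (pair_pmf P (rep P t))"

lemma prob_rep_None:
  "measure_pmf.prob (rep P t) {f. f x = None} = measure_pmf.prob P {f. f x = None} ^ t"
proof (induction t)
  case 0 then show ?case by simp
next
  case (Suc t)
  have "(\<lambda>(f, g). firstc f g) -` {f. f x = None} = {f. f x = None} \<times> {g. g x = None}"
    by (auto simp: firstc_def split: option.splits)
  then show ?case using Suc by (simp add: prob_pair_times)
qed

lemma prob_rep_Some:
  "measure_pmf.prob (rep P t) {f. f x = Some a} = measure_pmf.prob P {f. f x = Some a} * (\<Sum>i<t. measure_pmf.prob P {f. f x = None} ^ i)"
proof (induction t)
  case 0 then show ?case by simp
next
  case (Suc t)
  have "(\<lambda>(f, g). firstc f g) -` {f. f x = Some a} = {f. f x = Some a} \<times> UNIV \<union> {f. f x = None} \<times> {g. g x = Some a}"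
    by (auto simp: firstc_def split: option.splits)
  moreover have "measure_pmf.prob (pair_pmf P (rep P t)) ({f. f x = Some a} \<times> UNIV \<union> {f. f x = None} \<times> {g. g x = Some a})
     = measure_pmf.prob (pair_pmf P (rep P t)) ({f. f x = Some a} \<times> UNIV) + measure_pmf.prob (pair_pmf P (rep P t)) ({f. f x = None} \<times> {g. g x = Some a})"
    by (rule measure_pmf.finite_measure_Union) auto
  ultimately have "measure_pmf.prob (rep P (Suc t)) {f. f x = Some a} = measure_pmf.prob P {f. f x = Some a} + measure_pmf.prob P {f. f x = None} * (measure_pmf.prob P {f. f x = Some a} * (\<Sum>i<t. measure_pmf.prob P {f. f x = None} ^ i))"
    using Suc by (simp add: prob_pair_times)
  also have "\<dots> = measure_pmf.prob P {f. f x = Some a} * (1 + (\<Sum>i<t. measure_pmf.prob P {f. f x = None} * measure_pmf.prob P {f. f x = None} ^ i))"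
    by (simp add: sum_distrib_left algebra_simps)
  also have "\<dots> = measure_pmf.prob P {f. f x = Some a} * (\<Sum>i<Suc t. measure_pmf.prob P {f. f x = None} ^ i)"
    by (simp only: sum.lessThan_Suc_shift power_Suc power_0)
  finally show ?case .
qed

lemma CF_rep:
  assumes "\<forall>f\<in>set_pmf P. CF N D f"
  shows "\<forall>f\<in>set_pmf (rep P t). CF N (D + 3 * t) f"
proof (induction t)
  case 0 then show ?case by (simp add: CF_none)
next
  case (Suc t)
  show ?case using Suc assms
    by (auto intro!: CF_mono[OF CF_firstc[of N "D + 3 * t"]] intro: CF_mono)
qed



lemma step:
  assumes th: "-1 < \<theta>" "\<theta> < 1" and k: "0 < k"
  and RCF: "\<forall>F\<in>set_pmf R. CF (k^d) D F"
  and low: "\<forall>x. measure_pmf.prob R {F. F x \<noteq> None} \<ge> 1/2"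
  and cR: "\<forall>y b. measure_pmf.prob R {F. F y = Some b} = c y * Lk \<theta> k d b y"
  and T: "(1 - (min ((1+\<theta>)/2) ((1-\<theta>)/2) / 2)^k)^T \<le> 1/(2 * real k)"
  shows "\<exists>R'. (\<forall>F\<in>set_pmf R'. CF (k^Suc d) (D + 1 + 4*k + 3*T) F) \<and>
    (\<forall>x. measure_pmf.prob R' {F. F x \<noteq> None} \<ge> 1 - 1/(2 * real k)) \<and>
    (\<exists>c'. \<forall>x b. measure_pmf.prob R' {F. F x = Some b} = c' x * Lk \<theta> k (Suc d) b x)"
proof -
  define n where "n = k^d"
  define P where "P = agree \<theta> n R (k-1)"
  define m where "m = min ((1+\<theta>)/2) ((1-\<theta>)/2)"
  have m0: "0 < m" using th by (simp add: m_def)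
  have kk: "Suc (k - 1) = k" using k by simp
  have th': "-1 \<le> \<theta>" "\<theta> \<le> 1" using th by auto
  have cfP: "\<forall>f\<in>set_pmf P. CF (k^Suc d) (D + 1 + 4*k) f"
    using CF_agree[OF RCF[folded n_def], of "k-1" k \<theta>] k
    by (auto simp: P_def n_def intro: CF_mono)
  have cfR: "\<forall>f\<in>set_pmf (rep P T). CF (k^Suc d) (D + 1 + 4*k + 3*T) f"
    by (rule CF_rep[OF cfP])
  have msg_eq: "measure_pmf.prob (childdist \<theta> n R j) {f. f x = Some a} = c (shx n j x) * Qk \<theta> k d a (shx n j x)" for j x a
    using th' by (cases a) (simp_all add: prob_childdist cR Qk_eq pmf_child_label n_def algebra_simps)
  have pa: "measure_pmf.prob P {f. f x = Some a} = (\<Prod>j<k. c (shx n j x)) * Lk \<theta> k (Suc d) a x" for x a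
    unfolding P_def prob_agree kk msg_eq Lk_Suc[OF k] n_def[symmetric] by (simp add: prod.distrib)
  have msg_low: "measure_pmf.prob (childdist \<theta> n R j) {f. f x = Some True} \<ge> m / 2" for j x
  proof -
    have "m / 2 \<le> m * measure_pmf.prob R {F. F (shx n j x) \<noteq> None}"
      using low m0 by (simp add: mult_left_mono[of "1/2" _ m, simplified])
    also have "\<dots> = m * measure_pmf.prob R {F. F (shx n j x) = Some True} + m * measure_pmf.prob R {F. F (shx n j x) = Some False}"
      unfolding prob_three(1) by (simp add: algebra_simps)
    also have "\<dots> \<le> measure_pmf.prob R {F. F (shx n j x) = Some True} * ((1+\<theta>)/2) + measure_pmf.prob R {F. F (shx n j x) = Some False} * ((1-\<theta>)/2)"
    proof (intro add_mono)
      have mle: "m \<le> (1+\<theta>)/2" "m \<le> (1-\<theta>)/2" unfolding m_def by (rule min.cobounded1, rule min.cobounded2)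
      show "m * measure_pmf.prob R {F. F (shx n j x) = Some True} \<le> measure_pmf.prob R {F. F (shx n j x) = Some True} * ((1+\<theta>)/2)"
        using mult_right_mono[OF mle(1) measure_nonneg] by (simp add: mult.commute)
      show "m * measure_pmf.prob R {F. F (shx n j x) = Some False} \<le> measure_pmf.prob R {F. F (shx n j x) = Some False} * ((1-\<theta>)/2)"
        using mult_right_mono[OF mle(2) measure_nonneg] by (simp add: mult.commute)
    qed
    finally show ?thesis using th' by (simp add: prob_childdist)
  qed
  have pT_low: "(m/2)^k \<le> measure_pmf.prob P {f. f x = Some True}" for x
  proof -
    have "(m/2)^k = (\<Prod>j<k. m/2)" by simp
    also have "\<dots> \<le> (\<Prod>j<k. measure_pmf.prob (childdist \<theta> n R j) {f. f x = Some True})"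
      by (intro prod_mono) (use msg_low m0 in auto)
    finally show ?thesis unfolding P_def prob_agree kk .
  qed
  have q_up: "measure_pmf.prob P {f. f x = None} \<le> 1 - (m/2)^k" for x
    using prob_three(1)[of P x] prob_three(2)[of P x] pT_low[of x] measure_nonneg[of P "{f. f x = Some False}"]
    by linarith
  have lowR: "measure_pmf.prob (rep P T) {F. F x \<noteq> None} \<ge> 1 - 1/(2 * real k)" for x
  proof -
    have "measure_pmf.prob P {f. f x = None} ^ T \<le> (1 - (m/2)^k) ^ T"
      by (intro power_mono q_up) simp
    also have "\<dots> \<le> 1/(2 * real k)" using T by (simp add: m_def)
    finally have "measure_pmf.prob (rep P T) {f. f x = None} \<le> 1/(2 * real k)" by (simp add: prob_rep_None)
    then show ?thesis using prob_three(2)[of "rep P T" x] by linarith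
  qed
  show ?thesis
    apply (rule exI[of _ "rep P T"])
    apply (intro conjI cfR allI)
    apply (rule lowR)
    apply (rule exI[of _ "\<lambda>x. (\<Prod>j<k. c (shx n j x)) * (\<Sum>i<T. measure_pmf.prob P {f. f x = None} ^ i)"])
    apply (simp add: prob_rep_Some pa)
    done
qed



lemma root_posterior_eq:
  "root_posterior \<theta> k d x = Lk \<theta> k d True x / (Lk \<theta> k d True x + Lk \<theta> k d False x)"
proof -
  have e1: "(\<lambda>X. (True, X)) -` {(r, X). r \<and> (\<forall>i<k ^ d. X i = x i)} = {X. \<forall>i<k^d. X i = x i}" by auto
  have e2: "(\<lambda>X. (False, X)) -` {(r, X). r \<and> (\<forall>i<k ^ d. X i = x i)} = {}" by auto
  have e3: "(\<lambda>X. (b, X)) -` {(r, X). (\<forall>i<k ^ d. X i = x i)} = {X. \<forall>i<k^d. X i = x i}" for b by auto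
  show ?thesis
    unfolding root_posterior_def broadcast_def prob_bind_bool
    by (simp only: measure_map_pmf e1 e2 e3 Lk_def[symmetric] pmf_bernoulli_half measure_empty)
       (simp add: field_simps add_divide_distrib[symmetric])
qed



theorem mainTheorem19:
  fixes \<theta> :: real and k :: nat
  assumes "-1 < \<theta>" and "\<theta> < 1" and "0 < k"
  shows "\<exists>h::real. h > 0 \<and> (\<forall>d::nat. \<exists>PF :: ((nat \<Rightarrow> bool) \<Rightarrow> bool option) pmf.
     (\<forall>F \<in> set_pmf PF. computable_depth (k ^ d) (h * real d) F) \<and>
     (\<forall>x. measure_pmf.prob PF {F. F x \<noteq> None} \<ge> 1 - 1 / (2 * real k)) \<and>
     (\<forall>x. measure_pmf.prob PF {F. F x = Some True} / measure_pmf.prob PF {F. F x \<noteq> None}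
            = root_posterior \<theta> k d x))"
proof -
  define m where "m = min ((1+\<theta>)/2) ((1-\<theta>)/2)"
  have m0: "0 < m" using assms by (simp add: m_def)
  have s0: "0 < (m/2)^k" using m0 by simp
  obtain T where T: "(1 - (m/2)^k)^T < 1/(2 * real k)"
    using real_arch_pow_inv[of "1/(2 * real k)" "1 - (m/2)^k"] s0 assms(3) by auto
  define H where "H = 1 + 4*k + 3*T"
  have half: "1/2 \<le> 1 - 1/(2 * real k)" using assms(3) by (simp add: field_simps)
  have inv: "\<exists>R. (\<forall>F\<in>set_pmf R. CF (k^d) (H * d) F) \<and>
    (\<forall>x. measure_pmf.prob R {F. F x \<noteq> None} \<ge> 1 - 1/(2 * real k)) \<and>
    (\<exists>c. \<forall>x b. measure_pmf.prob R {F. F x = Some b} = c x * Lk \<theta> k d b x)" for d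
  proof (induction d)
    case 0
    have cf: "CF 1 0 (\<lambda>x. Some (x 0))"
      unfolding CF_def decode_out_def
      by (intro exI[of _ "\<lambda>x. True"] exI[of _ "\<lambda>x. x 0"] conjI cd_const cd_inp) auto
    have L0: "Lk \<theta> k 0 b x = (if x 0 = b then 1 else 0)" for b x
      by (auto simp: Lk_def indicator_def)
    show ?case
      apply (rule exI[of _ "return_pmf (\<lambda>x. Some (x 0))"])
      apply (intro conjI allI)
      subgoal using cf by simp
      subgoal using half by (simp add: indicator_def)
      apply (rule exI[of _ "\<lambda>x. 1"])
      apply (auto simp: L0 indicator_def)
      done
  next
    case (Suc d)
    then obtain R c where R: "\<forall>F\<in>set_pmf R. CF (k^d) (H * d) F"
      "\<forall>x. measure_pmf.prob R {F. F x \<noteq> None} \<ge> 1 - 1/(2 * real k)"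
      "\<forall>x b. measure_pmf.prob R {F. F x = Some b} = c x * Lk \<theta> k d b x" by blast
    have low: "\<forall>x. measure_pmf.prob R {F. F x \<noteq> None} \<ge> 1/2" using R(2) half by (meson order_trans)
    from step[OF assms(1,2,3) R(1) low R(3), of T] T
    obtain R' where R': "\<forall>F\<in>set_pmf R'. CF (k^Suc d) (H * d + 1 + 4*k + 3*T) F"
      "\<forall>x. measure_pmf.prob R' {F. F x \<noteq> None} \<ge> 1 - 1/(2 * real k)"
      "\<exists>c'. \<forall>x b. measure_pmf.prob R' {F. F x = Some b} = c' x * Lk \<theta> k (Suc d) b x"
      by (auto simp: m_def)
    have "H * d + 1 + 4*k + 3*T = H * Suc d" by (simp add: H_def)
    then show ?case using R' by metis
  qed
  show ?thesis
  proof (intro exI[of _ "real H"] conjI allI)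
    show "0 < real H" by (simp add: H_def)
    fix d
    obtain R c where R: "\<forall>F\<in>set_pmf R. CF (k^d) (H * d) F"
      "\<forall>x. measure_pmf.prob R {F. F x \<noteq> None} \<ge> 1 - 1/(2 * real k)"
      "\<forall>x b. measure_pmf.prob R {F. F x = Some b} = c x * Lk \<theta> k d b x" using inv by blast
    show "\<exists>PF :: ((nat \<Rightarrow> bool) \<Rightarrow> bool option) pmf.
     (\<forall>F \<in> set_pmf PF. computable_depth (k ^ d) (real H * real d) F) \<and>
     (\<forall>x. measure_pmf.prob PF {F. F x \<noteq> None} \<ge> 1 - 1 / (2 * real k)) \<and>
     (\<forall>x. measure_pmf.prob PF {F. F x = Some True} / measure_pmf.prob PF {F. F x \<noteq> None}
            = root_posterior \<theta> k d x)"
    proof (intro exI[of _ R] conjI allI ballI)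
      fix F assume "F \<in> set_pmf R"
      then show "computable_depth (k ^ d) (real H * real d) F"
        using R(1) by (auto intro: CF_computable)
    next
      fix x show "measure_pmf.prob R {F. F x \<noteq> None} \<ge> 1 - 1 / (2 * real k)" using R(2) by blast
    next
      fix x
      have pos: "measure_pmf.prob R {F. F x \<noteq> None} > 0" using R(2) half by (meson order_less_le_trans dual_order.strict_trans1 less_le_trans half_gt_zero zero_less_one order.strict_trans2 )
      have sum: "measure_pmf.prob R {F. F x \<noteq> None} = c x * (Lk \<theta> k d True x + Lk \<theta> k d False x)"
        by (simp only: prob_three(1) R(3) distrib_left)
      then have "c x \<noteq> 0" using pos by auto
      then show "measure_pmf.prob R {F. F x = Some True} / measure_pmf.prob R {F. F x \<noteq> None} = root_posterior \<theta> k d x"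
        unfolding sum root_posterior_eq by (simp add: R(3))
    qed
  qed
qed


end
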